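(* Let $S$ be a monoid. Then (1) the ternary commutator $[1,1,1]$ is the smallest congruence $\delta$ of $S$ such that $S/\delta$ embeds into a $2$-nilpotent group; (2) $[1,1,1]$ equals the smallest cancellative congruence of $S$ containing $[[1,1],1]\vee[1,[1,1]]$, equals the smallest cancellative congruence containing $[[1,1],1]$, and equals the smallest cancellative congruence containing $\rho_2$.
   Context: Commutators are those of the semigroup $(S,\cdot)$: for congruences $\alpha_1,\dots,\alpha_k$, $M(\alpha_1,\dots,\alpha_k)$ is the subsemigroup of $S^{\{0,1\}^k}$ generated by all $g$ such that for some $i$ and $(a,b)\in\alpha_i$, $g(x)=a$ if $x_i=0$ and $g(x)=b$ if $x_i=1$; $[\alpha_1,\dots,\alpha_k]$ is the smallest congruence $\delta$ such that for all $f\in M(\alpha_1,\dots,\alpha_k)$: if $(f(x0),f(x1))\in\delta$ for all $x\in\{0,1\}^{k-1}\setminus\{(1,\dots,1)\}$ then $(f(1,\dots,1,0),f(1,\dots,1,1))\in\delta$. $1$ is the total congruence. A congruence $\sigma$ is cancellative if $S/\sigma$ is cancellative. $q_1(x,y,z)=xy$, $q_2(x,y,z)=xyz_1yx$, and $\rho_2$ is the congruence generated by all pairs $(xyz_1yx,\ yxz_1xy)$ with $x,y,z_1\in S$. A $2$-nilpotent group has nilpotency class at most $2$. *)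

theory Defs
  imports Main "HOL-Algebra.Group"
begin

definition is_cong :: "('a::monoid_mult \<times> 'a) set \<Rightarrow> bool" where
  "is_cong \<theta> \<longleftrightarrow> equiv UNIV \<theta> \<and>
     (\<forall>a b c d. (a, b) \<in> \<theta> \<longrightarrow> (c, d) \<in> \<theta> \<longrightarrow> (a * c, b * d) \<in> \<theta>)"

definition cong_gen :: "('a::monoid_mult \<times> 'a) set \<Rightarrow> ('a \<times> 'a) set" where
  "cong_gen R = \<Inter>{\<theta>. is_cong \<theta> \<and> R \<subseteq> \<theta>}"

definition cong_join :: "('a::monoid_mult \<times> 'a) set \<Rightarrow> ('a \<times> 'a) set \<Rightarrow> ('a \<times> 'a) set" where
  "cong_join \<alpha> \<beta> = cong_gen (\<alpha> \<union> \<beta>)"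

definition total_cong :: "('a::monoid_mult \<times> 'a) set" where
  "total_cong = UNIV"

text \<open>Points of the cube {0,1}^k are bool lists of length k (False = 0, True = 1).
  Elements of S^{{0,1}^k} are functions on bool lists; values outside length k are fixed to 1.\<close>

definition comm_gens :: "('a::monoid_mult \<times> 'a) set list \<Rightarrow> (bool list \<Rightarrow> 'a) set" where
  "comm_gens \<alpha>s = {g. \<exists>i < length \<alpha>s. \<exists>a b. (a, b) \<in> \<alpha>s ! i \<and>
      g = (\<lambda>x. if length x = length \<alpha>s then (if x ! i then b else a) else 1)}"

inductive_set comm_M :: "('a::monoid_mult \<times> 'a) set list \<Rightarrow> (bool list \<Rightarrow> 'a) set"
  for \<alpha>s where
  gen: "g \<in> comm_gens \<alpha>s \<Longrightarrow> g \<in> comm_M \<alpha>s"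
| mult: "f \<in> comm_M \<alpha>s \<Longrightarrow> g \<in> comm_M \<alpha>s \<Longrightarrow> (\<lambda>x. f x * g x) \<in> comm_M \<alpha>s"

definition term_cond :: "('a::monoid_mult \<times> 'a) set list \<Rightarrow> ('a \<times> 'a) set \<Rightarrow> bool" where
  "term_cond \<alpha>s \<delta> \<longleftrightarrow> (\<forall>f \<in> comm_M \<alpha>s.
     (\<forall>x. length x = length \<alpha>s - 1 \<and> x \<noteq> replicate (length \<alpha>s - 1) True
          \<longrightarrow> (f (x @ [False]), f (x @ [True])) \<in> \<delta>)
     \<longrightarrow> (f (replicate (length \<alpha>s - 1) True @ [False]),
          f (replicate (length \<alpha>s - 1) True @ [True])) \<in> \<delta>)"

definition commutator :: "('a::monoid_mult \<times> 'a) set list \<Rightarrow> ('a \<times> 'a) set" where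
  "commutator \<alpha>s = \<Inter>{\<delta>. is_cong \<delta> \<and> term_cond \<alpha>s \<delta>}"

definition cancellative_cong :: "('a::monoid_mult \<times> 'a) set \<Rightarrow> bool" where
  "cancellative_cong \<sigma> \<longleftrightarrow> is_cong \<sigma> \<and>
     (\<forall>a b c. (a * c, b * c) \<in> \<sigma> \<longrightarrow> (a, b) \<in> \<sigma>) \<and>
     (\<forall>a b c. (c * a, c * b) \<in> \<sigma> \<longrightarrow> (a, b) \<in> \<sigma>)"

definition canc_gen :: "('a::monoid_mult \<times> 'a) set \<Rightarrow> ('a \<times> 'a) set" where
  "canc_gen R = \<Inter>{\<sigma>. cancellative_cong \<sigma> \<and> R \<subseteq> \<sigma>}"

definition rho2 :: "('a::monoid_mult \<times> 'a) set" where
  "rho2 = cong_gen {(x * y * z * y * x, y * x * z * x * y) | x y z. True}"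

definition nilpotent2_group :: "('g, 'b) monoid_scheme \<Rightarrow> bool" where
  "nilpotent2_group G \<longleftrightarrow> group G \<and>
     (\<forall>x \<in> carrier G. \<forall>y \<in> carrier G. \<forall>z \<in> carrier G.
        (inv\<^bsub>G\<^esub> x \<otimes>\<^bsub>G\<^esub> inv\<^bsub>G\<^esub> y \<otimes>\<^bsub>G\<^esub> x \<otimes>\<^bsub>G\<^esub> y) \<otimes>\<^bsub>G\<^esub> z
        = z \<otimes>\<^bsub>G\<^esub> (inv\<^bsub>G\<^esub> x \<otimes>\<^bsub>G\<^esub> inv\<^bsub>G\<^esub> y \<otimes>\<^bsub>G\<^esub> x \<otimes>\<^bsub>G\<^esub> y))"

text \<open>S/delta embeds into G: a semigroup homomorphism S -> G whose kernel is exactly delta.\<close>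
definition quot_embeds_into :: "('a::monoid_mult \<times> 'a) set \<Rightarrow> ('g, 'b) monoid_scheme \<Rightarrow> bool" where
  "quot_embeds_into \<delta> G \<longleftrightarrow> (\<exists>h. (\<forall>x. h x \<in> carrier G) \<and>
     (\<forall>x y. h (x * y) = h x \<otimes>\<^bsub>G\<^esub> h y) \<and>
     (\<forall>x y. h x = h y \<longleftrightarrow> (x, y) \<in> \<delta>))"

end

theory Submission
  imports Defs
begin

lemma is_cong_iff: "is_cong \<theta> \<longleftrightarrow> (\<forall>a. (a,a)\<in>\<theta>) \<and> (\<forall>a b. (a,b)\<in>\<theta> \<longrightarrow> (b,a)\<in>\<theta>) \<and>
   (\<forall>a b c. (a,b)\<in>\<theta> \<longrightarrow> (b,c)\<in>\<theta> \<longrightarrow> (a,c)\<in>\<theta>) \<and>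
   (\<forall>a b c d. (a,b)\<in>\<theta> \<longrightarrow> (c,d)\<in>\<theta> \<longrightarrow> (a*c,b*d)\<in>\<theta>)"
  unfolding is_cong_def equiv_def refl_on_def sym_on_def trans_on_def by simp

lemma is_congD:
  assumes "is_cong \<theta>"
  shows "(a,a)\<in>\<theta>" "(a,b)\<in>\<theta> \<Longrightarrow> (b,a)\<in>\<theta>"
    "(a,b)\<in>\<theta> \<Longrightarrow> (b,c)\<in>\<theta> \<Longrightarrow> (a,c)\<in>\<theta>"
    "(a,b)\<in>\<theta> \<Longrightarrow> (c,d)\<in>\<theta> \<Longrightarrow> (a*c,b*d)\<in>\<theta>"
  using assms unfolding is_cong_iff by blast+

lemma is_congI:
  assumes "\<And>a. (a,a)\<in>\<theta>" "\<And>a b. (a,b)\<in>\<theta> \<Longrightarrow> (b,a)\<in>\<theta>"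
    "\<And>a b c. (a,b)\<in>\<theta> \<Longrightarrow> (b,c)\<in>\<theta> \<Longrightarrow> (a,c)\<in>\<theta>"
    "\<And>a b c d. (a,b)\<in>\<theta> \<Longrightarrow> (c,d)\<in>\<theta> \<Longrightarrow> (a*c,b*d)\<in>\<theta>"
  shows "is_cong (\<theta>::('a::monoid_mult\<times>'a) set)"
  unfolding is_cong_iff using assms by blast

lemma is_cong_Inter: "(\<And>\<theta>. \<theta> \<in> A \<Longrightarrow> is_cong \<theta>) \<Longrightarrow> is_cong (\<Inter>A)"
  by (rule is_congI) (auto dest: is_congD)

lemma commutator_cong: "is_cong (commutator \<alpha>s)"
  unfolding commutator_def by (rule is_cong_Inter) auto

lemma commutator_tc: "term_cond \<alpha>s (commutator \<alpha>s)"
  unfolding term_cond_def commutator_def by blast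

lemma commutator_least: "is_cong \<delta> \<Longrightarrow> term_cond \<alpha>s \<delta> \<Longrightarrow> commutator \<alpha>s \<subseteq> \<delta>"
  unfolding commutator_def by blast

lemma cong_gen_cong: "is_cong (cong_gen R)"
  unfolding cong_gen_def by (rule is_cong_Inter) auto

lemma cong_gen_sub: "R \<subseteq> cong_gen R"
  unfolding cong_gen_def by blast

lemma cong_gen_least: "is_cong \<theta> \<Longrightarrow> R \<subseteq> \<theta> \<Longrightarrow> cong_gen R \<subseteq> \<theta>"
  unfolding cong_gen_def by blast

lemma canc_gen_canc: "cancellative_cong (canc_gen R)"
proof -
  have "is_cong (canc_gen R)" unfolding canc_gen_def
    by (rule is_cong_Inter) (simp add: cancellative_cong_def)
  moreover have "(a, b) \<in> canc_gen R" if "(a * c, b * c) \<in> canc_gen R" for a b c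
    using that unfolding canc_gen_def cancellative_cong_def by blast
  moreover have "(a, b) \<in> canc_gen R" if "(c * a, c * b) \<in> canc_gen R" for a b c
    using that unfolding canc_gen_def cancellative_cong_def by blast
  ultimately show ?thesis unfolding cancellative_cong_def by blast
qed

lemma canc_gen_sub: "R \<subseteq> canc_gen R"
  unfolding canc_gen_def by blast

lemma canc_gen_least: "cancellative_cong \<theta> \<Longrightarrow> R \<subseteq> \<theta> \<Longrightarrow> canc_gen R \<subseteq> \<theta>"
  unfolding canc_gen_def by blast

lemma comm_M_gen:
  assumes "i < length \<alpha>s" "(a,b) \<in> \<alpha>s ! i"
  shows "(\<lambda>x. if length x = length \<alpha>s then (if x!i then b else a) else 1) \<in> comm_M \<alpha>s"
  by (rule comm_M.gen) (use assms in \<open>auto simp: comm_gens_def\<close>)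

lemma len2_cases: "length (x::bool list) = 2 \<Longrightarrow> x = [False,False] \<or> x = [False,True] \<or> x = [True,False] \<or> x = [True,True]"
proof -
  assume "length x = 2"
  then obtain a b where "x = [a,b]"
    by (metis length_0_conv length_Suc_conv numeral_2_eq_2)
  then show ?thesis by (cases a; cases b) auto
qed

lemma rep2: "replicate (length [\<alpha>,\<beta>,\<gamma>] - 1) True = [True,True]"
  by (simp add: numeral_2_eq_2)

lemma rep1: "replicate (length [\<alpha>,\<beta>] - 1) True = [True]"
  by simp

lemma tc3D:
  assumes "term_cond [\<alpha>,\<beta>,\<gamma>] \<delta>" "f\<in>comm_M [\<alpha>,\<beta>,\<gamma>]"
     "(f [False,False,False], f [False,False,True]) \<in> \<delta>"
     "(f [False,True,False], f [False,True,True]) \<in> \<delta>"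
     "(f [True,False,False], f [True,False,True]) \<in> \<delta>"
  shows "(f [True,True,False], f [True,True,True]) \<in> \<delta>"
proof -
  have "\<forall>x. length x = length [\<alpha>,\<beta>,\<gamma>] - 1 \<and> x \<noteq> replicate (length [\<alpha>,\<beta>,\<gamma>] - 1) True
          \<longrightarrow> (f (x @ [False]), f (x @ [True])) \<in> \<delta>"
  proof (intro allI impI)
    fix x :: "bool list"
    assume h: "length x = length [\<alpha>,\<beta>,\<gamma>] - 1 \<and> x \<noteq> replicate (length [\<alpha>,\<beta>,\<gamma>] - 1) True"
    then have "length x = 2" "x \<noteq> [True,True]" unfolding rep2 by simp_all
    then have "x = [False,False] \<or> x = [False,True] \<or> x = [True,False]" using len2_cases by blast
    then show "(f (x @ [False]), f (x @ [True])) \<in> \<delta>" using assms(3-5) by auto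
  qed
  then have "(f (replicate (length [\<alpha>,\<beta>,\<gamma>] - 1) True @ [False]),
          f (replicate (length [\<alpha>,\<beta>,\<gamma>] - 1) True @ [True])) \<in> \<delta>"
    using assms(1,2) unfolding term_cond_def by blast
  then show ?thesis unfolding rep2 by simp
qed

lemma tc3I:
  assumes "\<And>f. f\<in>comm_M [\<alpha>,\<beta>,\<gamma>] \<Longrightarrow>
     (f [False,False,False], f [False,False,True]) \<in> \<delta> \<Longrightarrow>
     (f [False,True,False], f [False,True,True]) \<in> \<delta> \<Longrightarrow>
     (f [True,False,False], f [True,False,True]) \<in> \<delta> \<Longrightarrow>
     (f [True,True,False], f [True,True,True]) \<in> \<delta>"
  shows "term_cond [\<alpha>,\<beta>,\<gamma>] \<delta>"
  unfolding term_cond_def rep2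
proof (intro ballI impI)
  fix f assume f: "f \<in> comm_M [\<alpha>,\<beta>,\<gamma>]"
  assume h: "\<forall>x. length x = length [\<alpha>,\<beta>,\<gamma>] - 1 \<and> x \<noteq> [True,True] \<longrightarrow> (f (x @ [False]), f (x @ [True])) \<in> \<delta>"
  have "(f ([False,False] @ [False]), f ([False,False] @ [True])) \<in> \<delta>"
     "(f ([False,True] @ [False]), f ([False,True] @ [True])) \<in> \<delta>"
     "(f ([True,False] @ [False]), f ([True,False] @ [True])) \<in> \<delta>"
    using h[rule_format, of "[False,False]"] h[rule_format, of "[False,True]"]
      h[rule_format, of "[True,False]"] by simp_all
  then show "(f ([True,True] @ [False]), f ([True,True] @ [True])) \<in> \<delta>"
    using assms[OF f] by simp
qed

lemma tc2D:
  assumes "term_cond [\<alpha>,\<beta>] \<delta>" "f\<in>comm_M [\<alpha>,\<beta>]"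
     "(f [False,False], f [False,True]) \<in> \<delta>"
  shows "(f [True,False], f [True,True]) \<in> \<delta>"
proof -
  have "\<forall>x. length x = length [\<alpha>,\<beta>] - 1 \<and> x \<noteq> replicate (length [\<alpha>,\<beta>] - 1) True
          \<longrightarrow> (f (x @ [False]), f (x @ [True])) \<in> \<delta>"
  proof (intro allI impI)
    fix x :: "bool list"
    assume h: "length x = length [\<alpha>,\<beta>] - 1 \<and> x \<noteq> replicate (length [\<alpha>,\<beta>] - 1) True"
    then have "length x = 1" "x \<noteq> [True]" unfolding rep1 by simp_all
    then have "x = [False]"
      by (cases x) auto
    then show "(f (x @ [False]), f (x @ [True])) \<in> \<delta>" using assms(3) by auto
  qed
  then have "(f (replicate (length [\<alpha>,\<beta>] - 1) True @ [False]),
          f (replicate (length [\<alpha>,\<beta>] - 1) True @ [True])) \<in> \<delta>"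
    using assms(1,2) unfolding term_cond_def by blast
  then show ?thesis unfolding rep1 by simp
qed

lemma tc2I:
  assumes "\<And>f. f\<in>comm_M [\<alpha>,\<beta>] \<Longrightarrow>
     (f [False,False], f [False,True]) \<in> \<delta> \<Longrightarrow> (f [True,False], f [True,True]) \<in> \<delta>"
  shows "term_cond [\<alpha>,\<beta>] \<delta>"
  unfolding term_cond_def rep1
proof (intro ballI impI)
  fix f assume f: "f \<in> comm_M [\<alpha>,\<beta>]"
  assume h: "\<forall>x. length x = length [\<alpha>,\<beta>] - 1 \<and> x \<noteq> [True] \<longrightarrow> (f (x @ [False]), f (x @ [True])) \<in> \<delta>"
  have "(f ([False] @ [False]), f ([False] @ [True])) \<in> \<delta>"
    using h[rule_format, of "[False]"] by simp
  then show "(f ([True] @ [False]), f ([True] @ [True])) \<in> \<delta>"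
    using assms[OF f] by simp
qed

definition gg :: "nat \<Rightarrow> nat \<Rightarrow> 'a \<Rightarrow> 'a \<Rightarrow> bool list \<Rightarrow> 'a::monoid_mult" where
  "gg k i a b = (\<lambda>x. if length x = k then (if x!i then b else a) else 1)"

lemma gg_in: "i < length \<alpha>s \<Longrightarrow> (a,b) \<in> \<alpha>s ! i \<Longrightarrow> gg (length \<alpha>s) i a b \<in> comm_M \<alpha>s"
  unfolding gg_def by (rule comm_M_gen)

lemma gg_U3: "gg 3 i a b \<in> comm_M [total_cong, total_cong, total_cong]" if "i < 3"
proof -
  have "i = 0 \<or> i = 1 \<or> i = 2" using that by linarith
  then have "(a,b) \<in> [total_cong, total_cong, total_cong] ! i"
    by (auto simp: total_cong_def)
  moreover have l: "length [total_cong, total_cong, total_cong :: ('a\<times>'a) set] = 3" by simp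
  ultimately show ?thesis using that by (intro gg_in[of i "[total_cong, total_cong, total_cong]" a b, unfolded l]) simp_all
qed

lemma gg_U2: "gg 2 i a b \<in> comm_M [total_cong, total_cong]" if "i < 2"
proof -
  have "i = 0 \<or> i = 1" using that by linarith
  then have "(a,b) \<in> [total_cong, total_cong] ! i"
    by (auto simp: total_cong_def)
  moreover have l: "length [total_cong, total_cong :: ('a\<times>'a) set] = 2" by simp
  ultimately show ?thesis using that by (intro gg_in[of i "[total_cong, total_cong]" a b, unfolded l]) simp_all
qed

lemma gg_eval[simp]: "gg k i a b x = (if length x = k then (if x!i then b else a) else 1)"
  unfolding gg_def by (rule refl)

lemma mM: "f \<in> comm_M \<alpha>s \<Longrightarrow> g \<in> comm_M \<alpha>s \<Longrightarrow> (\<lambda>x. f x * g x) \<in> comm_M \<alpha>s"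
  by (rule comm_M.mult)

locale tc3cong =
  fixes \<delta> :: "('a::monoid_mult \<times> 'a) set"
  assumes cong: "is_cong \<delta>"
  and tc: "term_cond [total_cong, total_cong, total_cong] \<delta>"
begin

lemma tcD:
  assumes "f \<in> comm_M [total_cong, total_cong, total_cong]"
   "(f [False,False,False], f [False,False,True]) \<in> \<delta>"
   "(f [False,True,False], f [False,True,True]) \<in> \<delta>"
   "(f [True,False,False], f [True,False,True]) \<in> \<delta>"
  shows "(f [True,True,False], f [True,True,True]) \<in> \<delta>"
  using tc3D[OF tc assms] .

lemma rcancel: assumes "(a*c, b*c) \<in> \<delta>" shows "(a,b) \<in> \<delta>"
proof -
  let ?f = "\<lambda>x. gg 3 2 a b x * gg 3 0 c 1 x * gg 3 1 c 1 x"
  have f: "?f \<in> comm_M [total_cong, total_cong, total_cong]"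
    by (intro mM gg_U3) auto
  have "(a*c*c, b*c*c) \<in> \<delta>" using is_congD(4)[OF cong assms is_congD(1)[OF cong, of c]] .
  then show ?thesis using tcD[OF f] assms by (simp add: mult.assoc)
qed

lemma lcancel: assumes "(c*a, c*b) \<in> \<delta>" shows "(a,b) \<in> \<delta>"
proof -
  let ?f = "\<lambda>x. gg 3 0 c 1 x * gg 3 1 c 1 x * gg 3 2 a b x"
  have f: "?f \<in> comm_M [total_cong, total_cong, total_cong]"
    by (intro mM gg_U3) auto
  have "(c*(c*a), c*(c*b)) \<in> \<delta>" using is_congD(4)[OF cong is_congD(1)[OF cong, of c] assms] .
  then show ?thesis using tcD[OF f] assms by (simp add: mult.assoc)
qed

lemma canc: "cancellative_cong \<delta>"
  unfolding cancellative_cong_def using cong rcancel lcancel by blast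

lemma L1: "(q*p*p*q, p*q*q*p) \<in> \<delta>"
proof -
  let ?f = "\<lambda>x. gg 3 2 (p*q) 1 x * gg 3 0 1 p x * gg 3 1 1 (p*q) x * gg 3 0 1 q x * gg 3 2 1 (p*q) x"
  have f: "?f \<in> comm_M [total_cong, total_cong, total_cong]"
    by (intro mM gg_U3) auto
  have r: "(a,a) \<in> \<delta>" for a using is_congD(1)[OF cong] .
  have "(?f [True,True,False], ?f [True,True,True]) \<in> \<delta>"
    by (rule tcD[OF f]) (simp_all add: r mult.assoc)
  then have "(p*((q*p*p*q)*q), p*((p*q*q*p)*q)) \<in> \<delta>"
    by (simp add: mult.assoc)
  then have "((q*p*p*q)*q, (p*q*q*p)*q) \<in> \<delta>" by (rule lcancel)
  then show ?thesis by (rule rcancel)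
qed

lemma malcev: "(x*y*z*y*x, y*x*z*x*y) \<in> \<delta>"
proof -
  let ?f = "\<lambda>w. gg 3 2 x 1 w * gg 3 1 1 y w * gg 3 2 1 x w * gg 3 0 1 z w *
      gg 3 2 1 x w * gg 3 1 1 y w * gg 3 2 x 1 w"
  have f: "?f \<in> comm_M [total_cong, total_cong, total_cong]"
    by (intro mM gg_U3) auto
  have r: "(a,a) \<in> \<delta>" for a using is_congD(1)[OF cong] .
  have "(?f [True,True,False], ?f [True,True,True]) \<in> \<delta>"
    by (rule tcD[OF f]) (simp_all add: r mult.assoc L1[of x y, simplified mult.assoc])
  then show ?thesis by (simp add: mult.assoc)
qed

end

lemma tc2_swap:
  assumes "is_cong \<delta>" "term_cond [total_cong, total_cong] \<delta>"
  shows "(x*y, y*x) \<in> \<delta>"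
proof -
  let ?f = "\<lambda>w. gg 2 1 x 1 w * gg 2 0 1 y w * gg 2 1 1 x w"
  have f: "?f \<in> comm_M [total_cong, total_cong]"
    by (intro mM gg_U2) auto
  have r: "(a,a) \<in> \<delta>" for a using is_congD(1)[OF assms(1)] .
  show ?thesis using tc2D[OF assms(2) f] r by simp
qed

lemma swap_in_comm2: "(x*y, y*x) \<in> commutator [total_cong, total_cong]"
  using tc2_swap commutator_least unfolding commutator_def by blast

lemma malcev_in_CU:
  "(x*y*z*y*x, y*x*z*x*y) \<in> commutator [commutator [total_cong, total_cong], total_cong]"
proof -
  let ?C = "commutator [total_cong, total_cong]"
  have "(x*y*z*y*x, y*x*z*x*y) \<in> \<delta>"
    if "is_cong \<delta>" "term_cond [?C, total_cong] \<delta>" for \<delta>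
  proof -
    let ?f = "\<lambda>w. gg 2 1 (x*y*z) 1 w * gg 2 0 (x*y) (y*x) w * gg 2 1 1 (z*x*y) w"
    have l: "length [?C, total_cong] = 2" by simp
    have g0: "gg 2 0 (x*y) (y*x) \<in> comm_M [?C, total_cong]"
      using gg_in[of 0 "[?C, total_cong]" "x*y" "y*x", unfolded l] swap_in_comm2[of x y] by simp
    have g1: "gg 2 1 a b \<in> comm_M [?C, total_cong]" for a b
      using gg_in[of 1 "[?C, total_cong]" a b, unfolded l] by (simp add: total_cong_def)
    have f: "?f \<in> comm_M [?C, total_cong]"
      by (intro mM g0 g1)
    have r: "(a,a) \<in> \<delta>" for a using is_congD(1)[OF that(1)] .
    show ?thesis using tc2D[OF that(2) f] r by (simp add: mult.assoc)
  qed
  then show ?thesis unfolding commutator_def by blast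
qed

locale malc =
  fixes \<sigma> :: "('a::monoid_mult \<times> 'a) set"
  assumes canc: "cancellative_cong \<sigma>"
    and mal: "\<And>x y z. (x*y*z*y*x, y*x*z*x*y) \<in> \<sigma>"
begin

definition eqv (infix "\<approx>" 50) where "a \<approx> b \<longleftrightarrow> (a,b) \<in> \<sigma>"

lemma cong: "is_cong \<sigma>" using canc unfolding cancellative_cong_def by blast
lemma e_refl[simp]: "a \<approx> a" using is_congD(1)[OF cong] unfolding eqv_def .
lemma e_sym: "a \<approx> b \<Longrightarrow> b \<approx> a" using is_congD(2)[OF cong] unfolding eqv_def .
lemma e_trans[trans]: "a \<approx> b \<Longrightarrow> b \<approx> c \<Longrightarrow> a \<approx> c" using is_congD(3)[OF cong] unfolding eqv_def .
lemma e_mult: "a \<approx> b \<Longrightarrow> c \<approx> d \<Longrightarrow> a*c \<approx> b*d" using is_congD(4)[OF cong] unfolding eqv_def .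
lemma e_multr: "a \<approx> b \<Longrightarrow> a*c \<approx> b*c" using e_mult by simp
lemma e_multl: "a \<approx> b \<Longrightarrow> c*a \<approx> c*b" using e_mult by simp
lemma rc: "a*c \<approx> b*c \<Longrightarrow> a \<approx> b" using canc unfolding cancellative_cong_def eqv_def by blast
lemma lc: "c*a \<approx> c*b \<Longrightarrow> a \<approx> b" using canc unfolding cancellative_cong_def eqv_def by blast

lemma ore: "c * (b*b*c) \<approx> b * (c*c*b)"
  using mal[of c b 1] by (simp add: mult.assoc eqv_def)

lemma ore_ex: "\<exists>u v. a*u \<approx> b*v"
  using ore by blast

definition frel :: "'a \<times> 'a \<Rightarrow> 'a \<times> 'a \<Rightarrow> bool" where
  "frel p q \<longleftrightarrow> (\<exists>u v. fst p * u \<approx> fst q * v \<and> snd p * u \<approx> snd q * v)"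

lemma frelI: "a*u \<approx> c*v \<Longrightarrow> b*u \<approx> d*v \<Longrightarrow> frel (a,b) (c,d)"
  unfolding frel_def by auto

lemma frelE: assumes "frel (a,b) (c,d)" obtains u v where "a*u \<approx> c*v" "b*u \<approx> d*v"
  using assms unfolding frel_def by auto

lemma frel_refl[simp]: "frel p p"
  unfolding frel_def by (rule exI[of _ 1], rule exI[of _ 1]) simp

lemma frel_sym: "frel p q \<Longrightarrow> frel q p"
  unfolding frel_def by (blast intro: e_sym)

lemma frel_trans: assumes "frel p q" "frel q r" shows "frel p r"
proof -
  obtain a b c d e f where pqr: "p = (a,b)" "q = (c,d)" "r = (e,f)" by (cases p, cases q, cases r) auto
  obtain u v where uv: "a*u \<approx> c*v" "b*u \<approx> d*v" using assms(1) pqr frelE by metis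
  obtain s t where st: "c*s \<approx> e*t" "d*s \<approx> f*t" using assms(2) pqr frelE by metis
  obtain x y where xy: "v*x \<approx> s*y" using ore_ex by blast
  have "a*(u*x) \<approx> c*(v*x)" using e_multr[OF uv(1), of x] by (simp add: mult.assoc)
  also have "\<dots> \<approx> c*(s*y)" using e_multl[OF xy] .
  also have "\<dots> \<approx> e*(t*y)" using e_multr[OF st(1), of y] by (simp add: mult.assoc)
  finally have 1: "a*(u*x) \<approx> e*(t*y)" .
  have "b*(u*x) \<approx> d*(v*x)" using e_multr[OF uv(2), of x] by (simp add: mult.assoc)
  also have "\<dots> \<approx> d*(s*y)" using e_multl[OF xy] .
  also have "\<dots> \<approx> f*(t*y)" using e_multr[OF st(2), of y] by (simp add: mult.assoc)
  finally have 2: "b*(u*x) \<approx> f*(t*y)" .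
  show ?thesis unfolding pqr using frelI[OF 1 2] .
qed

lemma frel_scale: "frel (a,b) (a*u, b*u)"
  by (rule frelI[of a u _ 1]) (simp_all add: mult.assoc)

lemma frel_eqv: "a \<approx> c \<Longrightarrow> b \<approx> d \<Longrightarrow> frel (a,b) (c,d)"
  by (rule frelI[of a 1 _ 1]) simp_all

definition fmul :: "'a \<times> 'a \<Rightarrow> 'a \<times> 'a \<Rightarrow> 'a \<times> 'a" where
  "fmul p q = (fst p * (fst q * fst q * snd p), snd q * (snd p * snd p * fst q))"

lemma fmul_simp: "fmul (a,b) (c,d) = (a * (c*c*b), d * (b*b*c))"
  by (simp add: fmul_def)

lemma wit_indep:
  assumes "c*q \<approx> b*p" "c*q' \<approx> b*p'"
  shows "frel (a*p, d*q) (a*p', d*q')"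
proof -
  obtain r r' where rr: "q*r \<approx> q'*r'" using ore_ex by blast
  have "b*(p*r) \<approx> c*(q*r)" using e_multr[OF e_sym[OF assms(1)], of r] by (simp add: mult.assoc)
  also have "\<dots> \<approx> c*(q'*r')" using e_multl[OF rr] .
  also have "\<dots> \<approx> b*(p'*r')" using e_multr[OF assms(2), of r'] by (simp add: mult.assoc)
  finally have "p*r \<approx> p'*r'" by (rule lc)
  then have 1: "(a*p)*r \<approx> (a*p')*r'" using e_multl by (simp add: mult.assoc)
  have 2: "(d*q)*r \<approx> (d*q')*r'" using e_multl[OF rr] by (simp add: mult.assoc)
  show ?thesis by (rule frelI[OF 1 2])
qed

lemma fmul_wit:
  assumes "c*q \<approx> b*p"
  shows "frel (fmul (a,b) (c,d)) (a*p, d*q)"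
  unfolding fmul_simp by (rule wit_indep[OF ore assms])

lemma fmul_congL:
  assumes "frel (a,b) (a',b')"
  shows "frel (fmul (a,b) (c,d)) (fmul (a',b') (c,d))"
proof -
  obtain u v where uv: "a*u \<approx> a'*v" "b*u \<approx> b'*v" using assms frelE by metis
  define p where "p = c*c*b"
  define q where "q = b*b*c"
  have cq: "c*q \<approx> b*p" unfolding p_def q_def by (rule ore)
  obtain r s where rs: "p*r \<approx> u*s" using ore_ex by blast
  have "c*(q*r) \<approx> b*(p*r)" using e_multr[OF cq, of r] by (simp add: mult.assoc)
  also have "\<dots> \<approx> b*(u*s)" using e_multl[OF rs] .
  also have "\<dots> \<approx> b'*(v*s)" using e_multr[OF uv(2), of s] by (simp add: mult.assoc)
  finally have "c*(q*r) \<approx> b'*(v*s)" .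
  then have 1: "frel (fmul (a',b') (c,d)) (a'*(v*s), d*(q*r))" by (rule fmul_wit)
  have 2: "fmul (a,b) (c,d) = (a*p, d*q)" unfolding fmul_simp p_def q_def ..
  have 3: "frel (a*p, d*q) ((a*p)*r, (d*q)*r)" by (rule frel_scale)
  have "(a*p)*r \<approx> a*(u*s)" using e_multl[OF rs, of a] by (simp add: mult.assoc)
  also have "\<dots> \<approx> a'*(v*s)" using e_multr[OF uv(1), of s] by (simp add: mult.assoc)
  finally have 4: "frel ((a*p)*r, (d*q)*r) (a'*(v*s), d*(q*r))"
    by (intro frel_eqv) (simp_all add: mult.assoc)
  show ?thesis unfolding 2 using frel_trans[OF frel_trans[OF 3 4] frel_sym[OF 1]] .
qed

lemma fmul_congR:
  assumes "frel (c,d) (c',d')"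
  shows "frel (fmul (a,b) (c,d)) (fmul (a,b) (c',d'))"
proof -
  obtain u v where uv: "c*u \<approx> c'*v" "d*u \<approx> d'*v" using assms frelE by metis
  define p where "p = c*c*b"
  define q where "q = b*b*c"
  have cq: "c*q \<approx> b*p" unfolding p_def q_def by (rule ore)
  obtain r s where rs: "q*r \<approx> u*s" using ore_ex by blast
  have "c'*(v*s) \<approx> c*(u*s)" using e_multr[OF e_sym[OF uv(1)], of s] by (simp add: mult.assoc)
  also have "\<dots> \<approx> c*(q*r)" using e_multl[OF e_sym[OF rs]] .
  also have "\<dots> \<approx> b*(p*r)" using e_multr[OF cq, of r] by (simp add: mult.assoc)
  finally have "c'*(v*s) \<approx> b*(p*r)" .
  then have 1: "frel (fmul (a,b) (c',d')) (a*(p*r), d'*(v*s))" by (rule fmul_wit)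
  have 2: "fmul (a,b) (c,d) = (a*p, d*q)" unfolding fmul_simp p_def q_def ..
  have 3: "frel (a*p, d*q) ((a*p)*r, (d*q)*r)" by (rule frel_scale)
  have "(d*q)*r \<approx> d*(u*s)" using e_multl[OF rs, of d] by (simp add: mult.assoc)
  also have "\<dots> \<approx> d'*(v*s)" using e_multr[OF uv(2), of s] by (simp add: mult.assoc)
  finally have 4: "frel ((a*p)*r, (d*q)*r) (a*(p*r), d'*(v*s))"
    by (intro frel_eqv) (simp_all add: mult.assoc)
  show ?thesis unfolding 2 using frel_trans[OF frel_trans[OF 3 4] frel_sym[OF 1]] .
qed

lemma fmul_cong:
  assumes "frel p p'" "frel q q'"
  shows "frel (fmul p q) (fmul p' q')"
proof -
  obtain a b a' b' c d c' d' where e: "p = (a,b)" "p' = (a',b')" "q = (c,d)" "q' = (c',d')"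
    by (cases p, cases p', cases q, cases q') auto
  have 1: "frel (fmul (a,b) (c,d)) (fmul (a',b') (c,d))" using assms(1) unfolding e by (rule fmul_congL)
  have 2: "frel (fmul (a',b') (c,d)) (fmul (a',b') (c',d'))" using assms(2) unfolding e by (rule fmul_congR)
  show ?thesis unfolding e by (rule frel_trans[OF 1 2])
qed

lemma fmul_assoc: "frel (fmul (fmul x y) z) (fmul x (fmul y z))"
proof -
  obtain a b c d e f where e: "x = (a,b)" "y = (c,d)" "z = (e,f)"
    by (cases x, cases y, cases z) auto
  define p where "p = c*c*b"
  define q where "q = b*b*c"
  have cq: "c*q \<approx> b*p" unfolding p_def q_def by (rule ore)
  have xy: "fmul (a,b) (c,d) = (a*p, d*q)" unfolding fmul_simp p_def q_def ..
  define p2 where "p2 = e*e*(d*q)"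
  define q2 where "q2 = (d*q)*(d*q)*e"
  have eq2: "e*q2 \<approx> (d*q)*p2" unfolding p2_def q2_def by (rule ore)
  have xyz: "fmul (a*p, d*q) (e,f) = (a*p*p2, f*q2)" unfolding fmul_simp p2_def q2_def by (simp add: mult.assoc)
  define t where "t = e*e*d"
  define s where "s = d*d*e"
  have es: "e*s \<approx> d*t" unfolding s_def t_def by (rule ore)
  have yz: "fmul (c,d) (e,f) = (c*t, f*s)" unfolding fmul_simp s_def t_def ..
  obtain r r' where rr: "q2*r \<approx> s*r'" using ore_ex by blast
  have "d*(q*p2*r) \<approx> e*(q2*r)" using e_multr[OF e_sym[OF eq2], of r] by (simp add: mult.assoc)
  also have "\<dots> \<approx> e*(s*r')" using e_multl[OF rr] .
  also have "\<dots> \<approx> d*(t*r')" using e_multr[OF es, of r'] by (simp add: mult.assoc)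
  finally have "q*p2*r \<approx> t*r'" by (rule lc)
  then have "c*(t*r') \<approx> c*(q*p2*r)" by (rule e_multl[OF e_sym])
  also have "\<dots> \<approx> b*(p*p2*r)" using e_multr[OF cq, of "p2*r"] by (simp add: mult.assoc)
  finally have "(c*t)*r' \<approx> b*(p*p2*r)" by (simp add: mult.assoc)
  then have 1: "frel (fmul (a,b) (c*t,f*s)) (a*(p*p2*r), (f*s)*r')" by (rule fmul_wit)
  have 2: "frel (a*p*p2, f*q2) ((a*p*p2)*r, (f*q2)*r)" by (rule frel_scale)
  have 3: "frel ((a*p*p2)*r, (f*q2)*r) (a*(p*p2*r), (f*s)*r')"
    by (rule frel_eqv) (simp_all add: mult.assoc e_multl[OF rr])
  show ?thesis unfolding e xy xyz yz
    using frel_trans[OF frel_trans[OF 2 3] frel_sym[OF 1]] .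
qed

lemma fmul_lone: "frel (fmul (1,1) p) p"
proof -
  obtain c d where e: "p = (c,d)" by (cases p) auto
  show ?thesis unfolding e fmul_simp
    using frel_sym[OF frel_scale[of c d c]] by simp
qed

lemma fmul_linv: "frel (fmul (b,a) (a,b)) (1,1)"
  unfolding fmul_simp by (rule frelI[of _ 1 _ "b*(a*a*a)"]) simp_all

end

definition gcomm :: "('g,'b) monoid_scheme \<Rightarrow> 'g \<Rightarrow> 'g \<Rightarrow> 'g" where
  "gcomm G x y = inv\<^bsub>G\<^esub> x \<otimes>\<^bsub>G\<^esub> inv\<^bsub>G\<^esub> y \<otimes>\<^bsub>G\<^esub> x \<otimes>\<^bsub>G\<^esub> y"

definition central :: "('g,'b) monoid_scheme \<Rightarrow> 'g \<Rightarrow> bool" where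
  "central G k \<longleftrightarrow> k \<in> carrier G \<and> (\<forall>g\<in>carrier G. k \<otimes>\<^bsub>G\<^esub> g = g \<otimes>\<^bsub>G\<^esub> k)"

context group
begin

lemma canc1[simp]: "x \<in> carrier G \<Longrightarrow> y \<in> carrier G \<Longrightarrow> x \<otimes> (inv x \<otimes> y) = y"
  by (simp add: m_assoc[symmetric])
lemma canc2[simp]: "x \<in> carrier G \<Longrightarrow> y \<in> carrier G \<Longrightarrow> inv x \<otimes> (x \<otimes> y) = y"
  by (simp add: m_assoc[symmetric])

lemma gcomm_closed[simp]: "x \<in> carrier G \<Longrightarrow> y \<in> carrier G \<Longrightarrow> gcomm G x y \<in> carrier G"
  unfolding gcomm_def by simp

lemma centralD: "central G k \<Longrightarrow> x \<in> carrier G \<Longrightarrow> k \<otimes> x = x \<otimes> k"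
  unfolding central_def by blast
lemma centralC: "central G k \<Longrightarrow> k \<in> carrier G"
  unfolding central_def by blast

lemma central_one: "central G \<one>"
  unfolding central_def by simp

lemma commute_inv: "k \<in> carrier G \<Longrightarrow> b \<in> carrier G \<Longrightarrow> k \<otimes> b = b \<otimes> k \<Longrightarrow> k \<otimes> inv b = inv b \<otimes> k"
proof -
  assume k: "k \<in> carrier G" and b: "b \<in> carrier G" and e: "k \<otimes> b = b \<otimes> k"
  have "inv b \<otimes> (k \<otimes> b) \<otimes> inv b = inv b \<otimes> (b \<otimes> k) \<otimes> inv b" using e by simp
  then show ?thesis using k b by (simp add: m_assoc)
qed

lemma commute_mult: "k \<in> carrier G \<Longrightarrow> a \<in> carrier G \<Longrightarrow> b \<in> carrier G \<Longrightarrow>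
   k \<otimes> a = a \<otimes> k \<Longrightarrow> k \<otimes> b = b \<otimes> k \<Longrightarrow> k \<otimes> (a \<otimes> b) = (a \<otimes> b) \<otimes> k"
  by (metis m_assoc)

lemma central_mult: "central G a \<Longrightarrow> central G b \<Longrightarrow> central G (a \<otimes> b)"
  unfolding central_def by (metis m_assoc m_closed)

lemma central_inv: "central G a \<Longrightarrow> central G (inv a)"
  unfolding central_def by (metis commute_inv inv_closed inv_inv)

lemma central_conj: "central G k \<Longrightarrow> y \<in> carrier G \<Longrightarrow> y \<otimes> k \<otimes> inv y = k"
  by (metis centralC centralD inv_closed m_assoc r_inv r_one)

lemma central_conj': "central G k \<Longrightarrow> y \<in> carrier G \<Longrightarrow> inv y \<otimes> k \<otimes> y = k"
  by (metis central_conj inv_closed inv_inv)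

lemma gcomm_swap: "x \<in> carrier G \<Longrightarrow> y \<in> carrier G \<Longrightarrow> gcomm G y x = inv (gcomm G x y)"
proof -
  assume x: "x \<in> carrier G" and y: "y \<in> carrier G"
  have "gcomm G y x \<otimes> gcomm G x y = \<one>" unfolding gcomm_def using x y by (simp add: m_assoc)
  then have "inv (gcomm G x y) = gcomm G y x"
    by (rule inv_equality) (use x y in simp_all)
  then show ?thesis by (rule sym)
qed

lemma gcomm_sym_central:
  assumes x: "x \<in> carrier G" and y: "y \<in> carrier G" and c: "central G (gcomm G x y)"
  shows "central G (gcomm G y x)"
  unfolding gcomm_swap[OF x y] by (rule central_inv[OF c])

lemma gcomm_inv_central:
  assumes x: "x \<in> carrier G" and y: "y \<in> carrier G" and c: "central G (gcomm G x y)"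
  shows "central G (gcomm G x (inv y))"
proof -
  have "gcomm G x (inv y) = y \<otimes> gcomm G y x \<otimes> inv y" unfolding gcomm_def using x y by (simp add: m_assoc)
  also have "\<dots> = gcomm G y x" using central_conj gcomm_sym_central[OF x y c] y by blast
  finally show ?thesis using gcomm_sym_central[OF x y c] by simp
qed

lemma gcomm_mult_central:
  assumes x: "x \<in> carrier G" and y: "y \<in> carrier G" and z: "z \<in> carrier G"
    and c1: "central G (gcomm G x y)" and c2: "central G (gcomm G x z)"
  shows "central G (gcomm G x (y \<otimes> z))"
proof -
  have "gcomm G x (y \<otimes> z) = gcomm G x z \<otimes> (inv z \<otimes> gcomm G x y \<otimes> z)"
    unfolding gcomm_def using x y z by (simp add: m_assoc inv_mult_group)
  also have "\<dots> = gcomm G x z \<otimes> gcomm G x y" using central_conj'[OF c1 z] by simp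
  finally show ?thesis using central_mult[OF c2 c1] by simp
qed

lemma nil2_gen:
  assumes HC: "H \<subseteq> carrier G" and H1: "\<one> \<in> H"
    and gen: "\<And>X. X \<in> carrier G \<Longrightarrow> \<exists>a\<in>H. \<exists>b\<in>H. X = a \<otimes> inv b"
    and mal: "\<And>x y z. x\<in>H \<Longrightarrow> y\<in>H \<Longrightarrow> z\<in>H \<Longrightarrow> x \<otimes> y \<otimes> z \<otimes> y \<otimes> x = y \<otimes> x \<otimes> z \<otimes> x \<otimes> y"
    and x: "x \<in> carrier G" and y: "y \<in> carrier G"
  shows "central G (gcomm G x y)"
proof -
  have step1: "central G (gcomm G a b)" if a: "a \<in> H" and b: "b \<in> H" for a b
  proof -
    have aC: "a \<in> carrier G" and bC: "b \<in> carrier G" using a b HC by auto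
    define u where "u = a \<otimes> b"
    define v where "v = b \<otimes> a"
    have uC: "u \<in> carrier G" and vC: "v \<in> carrier G" unfolding u_def v_def using aC bC by auto
    have uv: "u \<otimes> v = v \<otimes> u" using mal[OF a b H1] aC bC unfolding u_def v_def by (simp add: m_assoc)
    have uzv: "u \<otimes> z \<otimes> v = v \<otimes> z \<otimes> u" if "z \<in> H" for z
      using mal[OF a b that] aC bC HC that unfolding u_def v_def by (auto simp add: m_assoc)
    define k where "k = inv v \<otimes> u"
    have kC: "k \<in> carrier G" unfolding k_def using uC vC by simp
    have kg: "gcomm G a b = k" unfolding k_def gcomm_def u_def v_def using aC bC
      by (simp add: m_assoc inv_mult_group)
    have uiv: "u \<otimes> inv v = inv v \<otimes> u"
    proof -
      have "inv v \<otimes> (u \<otimes> v) \<otimes> inv v = inv v \<otimes> (v \<otimes> u) \<otimes> inv v" using uv by simp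
      then show ?thesis using uC vC by (simp add: m_assoc)
    qed
    have kz: "k \<otimes> z = z \<otimes> k" if z: "z \<in> H" for z
    proof -
      have zC: "z \<in> carrier G" using z HC by auto
      have "inv v \<otimes> (u \<otimes> z \<otimes> v) \<otimes> inv v = inv v \<otimes> (v \<otimes> z \<otimes> u) \<otimes> inv v" using uzv[OF z] by simp
      then have "inv v \<otimes> u \<otimes> z = z \<otimes> (u \<otimes> inv v)" using uC vC zC by (simp add: m_assoc)
      then show ?thesis unfolding k_def uiv using uC vC zC by (simp add: m_assoc)
    qed
    have "k \<otimes> g = g \<otimes> k" if g: "g \<in> carrier G" for g
    proof -
      obtain c d where cd: "c \<in> H" "d \<in> H" "g = c \<otimes> inv d" using gen[OF g] by blast
      have cC: "c \<in> carrier G" and dC: "d \<in> carrier G" using cd HC by auto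
      have "k \<otimes> inv d = inv d \<otimes> k" using commute_inv[OF kC dC kz[OF cd(2)]] .
      then show ?thesis unfolding cd(3) using commute_mult[OF kC cC _ kz[OF cd(1)]] cC dC by simp
    qed
    then show ?thesis unfolding central_def kg using kC by blast
  qed
  have step2: "central G (gcomm G a g)" if a: "a \<in> H" and g: "g \<in> carrier G" for a g
  proof -
    obtain c d where cd: "c \<in> H" "d \<in> H" "g = c \<otimes> inv d" using gen[OF g] by blast
    have aC: "a \<in> carrier G" and cC: "c \<in> carrier G" and dC: "d \<in> carrier G" using a cd HC by auto
    show ?thesis unfolding cd(3)
      by (rule gcomm_mult_central[OF aC cC _ step1[OF a cd(1)] gcomm_inv_central[OF aC dC step1[OF a cd(2)]]])
        (use dC in simp)
  qed
  obtain c d where cd: "c \<in> H" "d \<in> H" "y = c \<otimes> inv d" using gen[OF y] by blast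
  have cC: "c \<in> carrier G" and dC: "d \<in> carrier G" using cd HC by auto
  have 1: "central G (gcomm G x c)" using gcomm_sym_central[OF cC x step2[OF cd(1) x]] .
  have 2: "central G (gcomm G x d)" using gcomm_sym_central[OF dC x step2[OF cd(2) x]] .
  show ?thesis unfolding cd(3)
    by (rule gcomm_mult_central[OF x cC _ 1 gcomm_inv_central[OF x dC 2]]) (use dC in simp)
qed

end

lemma nilpotent2_groupI:
  assumes "group G" "\<And>x y. x \<in> carrier G \<Longrightarrow> y \<in> carrier G \<Longrightarrow> central G (gcomm G x y)"
  shows "nilpotent2_group G"
  unfolding nilpotent2_group_def using assms unfolding central_def gcomm_def by blast

lemma nilpotent2_groupD:
  assumes "nilpotent2_group G" "x \<in> carrier G" "y \<in> carrier G"
  shows "central G (gcomm G x y)"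
  using assms unfolding nilpotent2_group_def central_def gcomm_def
  by (auto intro: group.gcomm_closed[unfolded gcomm_def])

definition enc :: "'a \<times> 'a \<Rightarrow> ('a \<times> bool) list" where
  "enc p = [(fst p, True), (snd p, False)]"
definition dec :: "('a \<times> bool) list \<Rightarrow> 'a \<times> 'a" where
  "dec l = (fst (l!0), fst (l!1))"
lemma dec_enc[simp]: "dec (enc p) = p" by (simp add: enc_def dec_def)

context malc
begin

definition rp where "rp p = (SOME q. frel p q)"
definition cls where "cls p = enc (rp p)"
definition GF :: "('a \<times> bool) list monoid" where
  "GF = \<lparr>carrier = range cls, mult = (\<lambda>X Y. cls (fmul (dec X) (dec Y))), one = cls (1,1)\<rparr>"
definition hh where "hh a = cls (a, 1)"

lemma rp_frel: "frel p (rp p)"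
  unfolding rp_def by (rule someI[of "frel p" p]) simp

lemma rp_eq: assumes "frel p q" shows "rp p = rp q"
proof -
  have "(\<lambda>x. frel p x) = (\<lambda>x. frel q x)"
    using assms by (auto intro: frel_trans frel_sym)
  then show ?thesis unfolding rp_def by simp
qed

lemma cls_eq: "cls p = cls q \<longleftrightarrow> frel p q"
proof
  assume "cls p = cls q"
  then have "dec (cls p) = dec (cls q)" by simp
  then have "rp p = rp q" unfolding cls_def by simp
  then show "frel p q" using rp_frel[of p] rp_frel[of q] by (metis frel_sym frel_trans)
next
  assume "frel p q" then show "cls p = cls q" unfolding cls_def using rp_eq by simp
qed

lemma dec_cls: "frel (dec (cls p)) p"
  unfolding cls_def by (simp add: frel_sym[OF rp_frel])

lemma GF_mult: "cls p \<otimes>\<^bsub>GF\<^esub> cls q = cls (fmul p q)"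
  unfolding GF_def by (simp add: cls_eq fmul_cong[OF dec_cls dec_cls])

lemma GF_carrier: "carrier GF = range cls" unfolding GF_def by simp
lemma GF_one: "\<one>\<^bsub>GF\<^esub> = cls (1,1)" unfolding GF_def by simp

lemma GF_group: "group GF"
proof (rule groupI)
  fix x y assume "x \<in> carrier GF" "y \<in> carrier GF"
  then obtain p q where "x = cls p" "y = cls q" unfolding GF_carrier by blast
  then show "x \<otimes>\<^bsub>GF\<^esub> y \<in> carrier GF" by (simp add: GF_mult GF_carrier)
next
  show "\<one>\<^bsub>GF\<^esub> \<in> carrier GF" unfolding GF_one GF_carrier by simp
next
  fix x y z assume "x \<in> carrier GF" "y \<in> carrier GF" "z \<in> carrier GF"
  then obtain p q r where "x = cls p" "y = cls q" "z = cls r" unfolding GF_carrier by blast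
  then show "x \<otimes>\<^bsub>GF\<^esub> y \<otimes>\<^bsub>GF\<^esub> z = x \<otimes>\<^bsub>GF\<^esub> (y \<otimes>\<^bsub>GF\<^esub> z)"
    by (simp add: GF_mult cls_eq fmul_assoc)
next
  fix x assume "x \<in> carrier GF"
  then obtain p where "x = cls p" unfolding GF_carrier by blast
  then show "\<one>\<^bsub>GF\<^esub> \<otimes>\<^bsub>GF\<^esub> x = x"
    by (simp add: GF_one GF_mult cls_eq fmul_lone)
next
  fix x assume "x \<in> carrier GF"
  then obtain a b where x: "x = cls (a,b)" unfolding GF_carrier by (metis rangeE surj_pair)
  have "cls (b,a) \<otimes>\<^bsub>GF\<^esub> x = \<one>\<^bsub>GF\<^esub>"
    unfolding x GF_mult GF_one cls_eq by (rule fmul_linv)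
  then show "\<exists>y\<in>carrier GF. y \<otimes>\<^bsub>GF\<^esub> x = \<one>\<^bsub>GF\<^esub>" unfolding GF_carrier by blast
qed

interpretation GFg: group GF by (rule GF_group)

lemma hh_carrier: "hh a \<in> carrier GF" unfolding hh_def GF_carrier by simp

lemma hh_mult: "hh (a*b) = hh a \<otimes>\<^bsub>GF\<^esub> hh b"
proof -
  have "frel (a*b, 1) ((a*b)*b, 1*b)" by (rule frel_scale)
  then show ?thesis unfolding hh_def GF_mult fmul_simp cls_eq by (simp add: mult.assoc)
qed

lemma hh_eq: "hh a = hh b \<longleftrightarrow> (a,b) \<in> \<sigma>"
proof
  assume "hh a = hh b"
  then have "frel (a,1) (b,1)" unfolding hh_def cls_eq .
  then obtain u v where uv: "a*u \<approx> b*v" "1*u \<approx> 1*v" using frelE by metis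
  have "b*v \<approx> b*u" using e_multl[OF e_sym[OF uv(2)[simplified]]] .
  then have "a*u \<approx> b*u" using uv(1) e_trans by blast
  then show "(a,b) \<in> \<sigma>" using rc unfolding eqv_def by blast
next
  assume "(a,b) \<in> \<sigma>"
  then show "hh a = hh b" unfolding hh_def cls_eq by (intro frel_eqv) (simp_all add: eqv_def)
qed

lemma hh_inv: "inv\<^bsub>GF\<^esub> (hh b) = cls (1,b)"
proof -
  have "cls (1,b) \<otimes>\<^bsub>GF\<^esub> hh b = \<one>\<^bsub>GF\<^esub>"
    unfolding hh_def GF_mult GF_one cls_eq fmul_simp
    by (rule frelI[of _ 1 _ "b*b*b"]) (simp_all add: mult.assoc)
  then show ?thesis by (rule GFg.inv_equality) (simp_all add: hh_def GF_carrier)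
qed

lemma GF_gen: "X \<in> carrier GF \<Longrightarrow> \<exists>a b. X = hh a \<otimes>\<^bsub>GF\<^esub> inv\<^bsub>GF\<^esub> (hh b)"
proof -
  assume "X \<in> carrier GF"
  then obtain a b where x: "X = cls (a,b)" unfolding GF_carrier by (metis rangeE surj_pair)
  have "hh a \<otimes>\<^bsub>GF\<^esub> inv\<^bsub>GF\<^esub> (hh b) = cls (a,b)"
    unfolding hh_inv by (simp add: hh_def GF_mult fmul_simp)
  then show ?thesis unfolding x by metis
qed

lemma GF_nil2: "nilpotent2_group GF"
proof (rule nilpotent2_groupI[OF GF_group])
  fix x y assume x: "x \<in> carrier GF" and y: "y \<in> carrier GF"
  show "central GF (gcomm GF x y)"
  proof (rule GFg.nil2_gen[OF _ _ _ _ x y])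
    show "range hh \<subseteq> carrier GF" using hh_carrier by blast
    show "\<one>\<^bsub>GF\<^esub> \<in> range hh" unfolding GF_one hh_def by simp
    show "\<exists>a\<in>range hh. \<exists>b\<in>range hh. X = a \<otimes>\<^bsub>GF\<^esub> inv\<^bsub>GF\<^esub> b" if "X \<in> carrier GF" for X
      using GF_gen[OF that] by blast
    show "a \<otimes>\<^bsub>GF\<^esub> b \<otimes>\<^bsub>GF\<^esub> c \<otimes>\<^bsub>GF\<^esub> b \<otimes>\<^bsub>GF\<^esub> a = b \<otimes>\<^bsub>GF\<^esub> a \<otimes>\<^bsub>GF\<^esub> c \<otimes>\<^bsub>GF\<^esub> a \<otimes>\<^bsub>GF\<^esub> b"
      if h: "a \<in> range hh" "b \<in> range hh" "c \<in> range hh" for a b c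
    proof -
      obtain p q r where "a = hh p" "b = hh q" "c = hh r" using h by blast
      moreover have "hh (p*q*r*q*p) = hh (q*p*r*p*q)" unfolding hh_eq by (rule mal)
      ultimately show ?thesis by (simp add: hh_mult)
    qed
  qed
qed

lemma GF_embeds: "quot_embeds_into \<sigma> GF"
  unfolding quot_embeds_into_def using hh_carrier hh_mult hh_eq by blast

lemma malc_embeds: "\<exists>G :: ('a \<times> bool) list monoid. nilpotent2_group G \<and> quot_embeds_into \<sigma> G"
  using GF_nil2 GF_embeds by blast

end

context group
begin

lemma lcan: "x \<in> carrier G \<Longrightarrow> y \<in> carrier G \<Longrightarrow> z \<in> carrier G \<Longrightarrow> x \<otimes> y = x \<otimes> z \<longleftrightarrow> y = z"
  by (metis canc2)

lemma klc: "central G k \<Longrightarrow> x \<in> carrier G \<Longrightarrow> y \<in> carrier G \<Longrightarrow> k \<otimes> (x \<otimes> y) = x \<otimes> (k \<otimes> y)"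
  by (metis centralC centralD m_assoc)

lemma cen_comm: "central G x \<Longrightarrow> central G y \<Longrightarrow> x \<otimes> y = y \<otimes> x"
  by (metis centralC centralD)

lemma cen_lcomm: "central G x \<Longrightarrow> central G y \<Longrightarrow> z \<in> carrier G \<Longrightarrow> x \<otimes> (y \<otimes> z) = y \<otimes> (x \<otimes> z)"
proof -
  assume x: "central G x" and y: "central G y" and z: "z \<in> carrier G"
  have "x \<otimes> (y \<otimes> z) = (x \<otimes> y) \<otimes> z" using x y z by (simp add: m_assoc centralC)
  also have "\<dots> = (y \<otimes> x) \<otimes> z" using cen_comm[OF x y] by simp
  also have "\<dots> = y \<otimes> (x \<otimes> z)" using x y z by (simp add: m_assoc centralC)
  finally show ?thesis .
qed

lemma swap_r: "x \<in> carrier G \<Longrightarrow> y \<in> carrier G \<Longrightarrow> z \<in> carrier G \<Longrightarrow>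
   y \<otimes> (x \<otimes> z) = x \<otimes> (y \<otimes> (gcomm G y x \<otimes> z))"
  unfolding gcomm_def by (simp add: m_assoc)

lemma prod3:
  assumes C: "a \<in> carrier G" "b \<in> carrier G" "c \<in> carrier G" "a' \<in> carrier G" "b' \<in> carrier G" "c' \<in> carrier G"
    and Z: "central G p" "central G q" "central G r" "central G p'" "central G q'" "central G r'"
    and K: "central G (gcomm G b a')" "central G (gcomm G c a')" "central G (gcomm G c b')"
  shows "a \<otimes> b \<otimes> c \<otimes> (p \<otimes> q \<otimes> r) \<otimes> (a' \<otimes> b' \<otimes> c' \<otimes> (p' \<otimes> q' \<otimes> r')) =
    (a \<otimes> a') \<otimes> (b \<otimes> b') \<otimes> (c \<otimes> c') \<otimes>
    ((p \<otimes> p' \<otimes> gcomm G b a') \<otimes> (q \<otimes> q' \<otimes> gcomm G c a') \<otimes> (r \<otimes> r' \<otimes> gcomm G c b'))"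
proof -
  note ZC = Z[THEN centralC] K[THEN centralC]
  note s = swap_r[OF C(4) C(3)] swap_r[OF C(4) C(2)] swap_r[OF C(5) C(3)]
  note k = klc[OF Z(1) C(4)] klc[OF Z(1) C(5)] klc[OF Z(1) C(6)]
    klc[OF Z(2) C(4)] klc[OF Z(2) C(5)] klc[OF Z(2) C(6)]
    klc[OF Z(3) C(4)] klc[OF Z(3) C(5)] klc[OF Z(3) C(6)]
    klc[OF K(1) C(3)] klc[OF K(1) C(5)] klc[OF K(1) C(6)]
    klc[OF K(2) C(5)] klc[OF K(2) C(6)] klc[OF K(3) C(6)]
  show ?thesis using C ZC
    by (simp add: m_assoc s k cen_comm cen_lcomm Z K)
qed

end


context group
begin

lemma prod2:
  assumes C: "a \<in> carrier G" "b \<in> carrier G" "a' \<in> carrier G" "b' \<in> carrier G"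
    and Z: "central G p" "central G p'"
    and K: "central G (gcomm G b a')"
  shows "a \<otimes> b \<otimes> p \<otimes> (a' \<otimes> b' \<otimes> p') = (a \<otimes> a') \<otimes> (b \<otimes> b') \<otimes> (p \<otimes> p' \<otimes> gcomm G b a')"
proof -
  note ZC = Z[THEN centralC] K[THEN centralC]
  note s = swap_r[OF C(3) C(2)]
  note k = klc[OF Z(1) C(3)] klc[OF Z(1) C(4)] klc[OF K(1) C(4)]
  show ?thesis using C ZC
    by (simp add: m_assoc s k cen_comm cen_lcomm Z K)
qed

lemma final3:
  assumes C: "c0 \<in> carrier G" "c1 \<in> carrier G"
    and Z: "\<And>i. central G (q i)" "\<And>i. central G (q' i)" "\<And>i. central G (r i)" "\<And>i. central G (r' i)"
    and E00: "c0 \<otimes> (q False \<otimes> r False) = c1 \<otimes> (q' False \<otimes> r' False)"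
    and E01: "c0 \<otimes> (q False \<otimes> r True) = c1 \<otimes> (q' False \<otimes> r' True)"
    and E10: "c0 \<otimes> (q True \<otimes> r False) = c1 \<otimes> (q' True \<otimes> r' False)"
  shows "c0 \<otimes> (q True \<otimes> r True) = c1 \<otimes> (q' True \<otimes> r' True)"
proof -
  note ZC = Z(1)[THEN centralC] Z(2)[THEN centralC] Z(3)[THEN centralC] Z(4)[THEN centralC]
  have "c1 \<otimes> (q' False \<otimes> r' True) = c0 \<otimes> (q False \<otimes> r False) \<otimes> (inv (r False) \<otimes> r True)"
    using E01 C ZC by (simp add: m_assoc)
  also have "\<dots> = c1 \<otimes> (q' False \<otimes> (r' False \<otimes> (inv (r False) \<otimes> r True)))"
    using E00 C ZC by (simp add: m_assoc)
  finally have "r' True = r' False \<otimes> (inv (r False) \<otimes> r True)"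
    using C ZC by (simp add: lcan)
  moreover have "c0 \<otimes> (q True \<otimes> r True) = c0 \<otimes> (q True \<otimes> r False) \<otimes> (inv (r False) \<otimes> r True)"
    using C ZC by (simp add: m_assoc)
  moreover have "\<dots> = c1 \<otimes> (q' True \<otimes> (r' False \<otimes> (inv (r False) \<otimes> r True)))"
    using E10 C ZC by (simp add: m_assoc)
  ultimately show ?thesis by simp
qed

end

lemma comm_gensE:
  assumes "g \<in> comm_gens \<alpha>s"
  obtains i a b where "i < length \<alpha>s" "(a,b) \<in> \<alpha>s ! i"
    "g = (\<lambda>x. if length x = length \<alpha>s then (if x!i then b else a) else 1)"
  using assms unfolding comm_gens_def by blast

locale emb = group +
  fixes h :: "'m::monoid_mult \<Rightarrow> 'a" and \<delta> :: "('m \<times> 'm) set"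
  assumes hC: "h x \<in> carrier G" and hm: "h (x*y) = h x \<otimes> h y"
    and hk: "h x = h y \<longleftrightarrow> (x,y) \<in> \<delta>"
    and nil: "u \<in> carrier G \<Longrightarrow> v \<in> carrier G \<Longrightarrow> central G (gcomm G u v)"
begin

lemma h1: "h 1 = \<one>"
proof -
  have "h 1 \<otimes> h 1 = h 1" using hm[of 1 1] by simp
  then show ?thesis using hC by simp
qed

definition nf3 :: "(bool \<Rightarrow> bool \<Rightarrow> bool \<Rightarrow> 'a) \<Rightarrow> bool" where
  "nf3 F \<longleftrightarrow> (\<exists>A B C P Q R. (\<forall>i. A i \<in> carrier G \<and> B i \<in> carrier G \<and> C i \<in> carrier G) \<and>
     (\<forall>i j. central G (P i j) \<and> central G (Q i j) \<and> central G (R i j)) \<and>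
     (\<forall>x1 x2 x3. F x1 x2 x3 = A x1 \<otimes> B x2 \<otimes> C x3 \<otimes> (P x1 x2 \<otimes> Q x1 x3 \<otimes> R x2 x3)))"

lemma nf3_M:
  assumes "f \<in> comm_M [\<alpha>,\<beta>,\<gamma>]"
  shows "nf3 (\<lambda>x1 x2 x3. h (f [x1,x2,x3]))"
  using assms
proof (induction rule: comm_M.induct)
  case (gen g)
  obtain i a b where i0: "i < length [\<alpha>,\<beta>,\<gamma>]" and "(a,b) \<in> [\<alpha>,\<beta>,\<gamma>] ! i"
    and g0: "g = (\<lambda>x. if length x = length [\<alpha>,\<beta>,\<gamma>] then (if x!i then b else a) else 1)"
    using gen by (rule comm_gensE)
  have l: "length [\<alpha>,\<beta>,\<gamma>] = 3" by simp
  have i: "i < 3" using i0 unfolding l .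
  have g: "g = (\<lambda>x. if length x = 3 then (if x!i then b else a) else 1)" using g0 unfolding l .
  have one: "\<And>x. x \<in> carrier G \<Longrightarrow> \<one> \<otimes> x = x" "\<And>x. x \<in> carrier G \<Longrightarrow> x \<otimes> \<one> = x" by simp_all
  have c1: "central G \<one>" by (rule central_one)
  have "i = 0 \<or> i = 1 \<or> i = 2" using i by linarith
  then show ?case
  proof (elim disjE)
    assume "i = 0"
    then show ?thesis unfolding nf3_def g
      by (rule_tac x="\<lambda>x1. h (if x1 then b else a)" in exI, rule_tac x="\<lambda>_. \<one>" in exI,
          rule_tac x="\<lambda>_. \<one>" in exI, (rule_tac x="\<lambda>_ _. \<one>" in exI)+) (simp add: hC c1)
  next
    assume "i = 1"
    then show ?thesis unfolding nf3_def g
      by (rule_tac x="\<lambda>_. \<one>" in exI, rule_tac x="\<lambda>x1. h (if x1 then b else a)" in exI,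
          rule_tac x="\<lambda>_. \<one>" in exI, (rule_tac x="\<lambda>_ _. \<one>" in exI)+) (simp add: hC c1)
  next
    assume "i = 2"
    then show ?thesis unfolding nf3_def g
      by (rule_tac x="\<lambda>_. \<one>" in exI, rule_tac x="\<lambda>_. \<one>" in exI,
          rule_tac x="\<lambda>x1. h (if x1 then b else a)" in exI, (rule_tac x="\<lambda>_ _. \<one>" in exI)+) (simp add: hC c1)
  qed
next
  case (mult f g)
  obtain A B C P Q R where 1: "\<forall>i. A i \<in> carrier G \<and> B i \<in> carrier G \<and> C i \<in> carrier G"
     "\<forall>i j. central G (P i j) \<and> central G (Q i j) \<and> central G (R i j)"
     "\<forall>x1 x2 x3. h (f [x1,x2,x3]) = A x1 \<otimes> B x2 \<otimes> C x3 \<otimes> (P x1 x2 \<otimes> Q x1 x3 \<otimes> R x2 x3)"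
    using mult.IH(1) unfolding nf3_def by blast
  obtain A' B' C' P' Q' R' where 2: "\<forall>i. A' i \<in> carrier G \<and> B' i \<in> carrier G \<and> C' i \<in> carrier G"
     "\<forall>i j. central G (P' i j) \<and> central G (Q' i j) \<and> central G (R' i j)"
     "\<forall>x1 x2 x3. h (g [x1,x2,x3]) = A' x1 \<otimes> B' x2 \<otimes> C' x3 \<otimes> (P' x1 x2 \<otimes> Q' x1 x3 \<otimes> R' x2 x3)"
    using mult.IH(2) unfolding nf3_def by blast
  show ?case unfolding nf3_def
  proof (intro exI conjI allI)
    fix i j
    show "A i \<otimes> A' i \<in> carrier G" "B i \<otimes> B' i \<in> carrier G" "C i \<otimes> C' i \<in> carrier G"
      using 1(1) 2(1) by auto
    show "central G (P i j \<otimes> P' i j \<otimes> gcomm G (B j) (A' i))"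
      "central G (Q i j \<otimes> Q' i j \<otimes> gcomm G (C j) (A' i))"
      "central G (R i j \<otimes> R' i j \<otimes> gcomm G (C j) (B' i))"
      using 1 2 by (auto intro!: central_mult nil)
  next
    fix x1 x2 x3
    show "h (f [x1,x2,x3] * g [x1,x2,x3]) = (A x1 \<otimes> A' x1) \<otimes> (B x2 \<otimes> B' x2) \<otimes> (C x3 \<otimes> C' x3) \<otimes>
      ((P x1 x2 \<otimes> P' x1 x2 \<otimes> gcomm G (B x2) (A' x1)) \<otimes> (Q x1 x3 \<otimes> Q' x1 x3 \<otimes> gcomm G (C x3) (A' x1)) \<otimes>
       (R x2 x3 \<otimes> R' x2 x3 \<otimes> gcomm G (C x3) (B' x2)))"
      unfolding hm 1(3)[rule_format] 2(3)[rule_format]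
      by (rule prod3) (use 1 2 in \<open>auto intro!: nil\<close>)
  qed
qed

lemma tc3: "term_cond [\<alpha>,\<beta>,\<gamma>] \<delta>"
proof (rule tc3I)
  fix f assume f: "f \<in> comm_M [\<alpha>,\<beta>,\<gamma>]"
  assume a: "(f [False,False,False], f [False,False,True]) \<in> \<delta>"
     "(f [False,True,False], f [False,True,True]) \<in> \<delta>"
     "(f [True,False,False], f [True,False,True]) \<in> \<delta>"
  obtain A B C P Q R where 1: "\<forall>i. A i \<in> carrier G \<and> B i \<in> carrier G \<and> C i \<in> carrier G"
     "\<forall>i j. central G (P i j) \<and> central G (Q i j) \<and> central G (R i j)"
     "\<forall>x1 x2 x3. h (f [x1,x2,x3]) = A x1 \<otimes> B x2 \<otimes> C x3 \<otimes> (P x1 x2 \<otimes> Q x1 x3 \<otimes> R x2 x3)"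
    using nf3_M[OF f] unfolding nf3_def by blast
  have E: "C False \<otimes> (Q x1 False \<otimes> R x2 False) = C True \<otimes> (Q x1 True \<otimes> R x2 True)"
    if "h (f [x1,x2,False]) = h (f [x1,x2,True])" for x1 x2
  proof -
    have PC: "P x1 x2 \<in> carrier G" using 1(2) centralC by blast
    have "A x1 \<otimes> (B x2 \<otimes> (P x1 x2 \<otimes> (C False \<otimes> (Q x1 False \<otimes> R x2 False)))) =
          A x1 \<otimes> (B x2 \<otimes> (P x1 x2 \<otimes> (C True \<otimes> (Q x1 True \<otimes> R x2 True))))"
      using that 1 unfolding 1(3)[rule_format]
      by (simp add: m_assoc klc centralC)
    then show ?thesis using 1 PC by (simp add: lcan centralC)
  qed
  have "C False \<otimes> (Q True False \<otimes> R True False) = C True \<otimes> (Q True True \<otimes> R True True)"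
    by (rule final3[where q="\<lambda>i. Q i False" and q'="\<lambda>i. Q i True" and r="\<lambda>i. R i False" and r'="\<lambda>i. R i True"])
       (use 1 E[OF a(1)[folded hk]] E[OF a(2)[folded hk]] E[OF a(3)[folded hk]] in auto)
  then have "A True \<otimes> (B True \<otimes> (P True True \<otimes> (C False \<otimes> (Q True False \<otimes> R True False)))) =
     A True \<otimes> (B True \<otimes> (P True True \<otimes> (C True \<otimes> (Q True True \<otimes> R True True))))" by simp
  then have "h (f [True,True,False]) = h (f [True,True,True])"
    unfolding 1(3)[rule_format] using 1 by (simp add: m_assoc klc centralC)
  then show "(f [True,True,False], f [True,True,True]) \<in> \<delta>" using hk by blast
qed

end

context group
begin

lemma kap_lemma:
  assumes C: "a \<in> carrier G" "b0 \<in> carrier G" "b1 \<in> carrier G" and Z: "central G p" "central G p'"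
  shows "central G (inv (a \<otimes> b0 \<otimes> p) \<otimes> (a \<otimes> b1 \<otimes> p')) \<longleftrightarrow> central G (inv b0 \<otimes> b1)"
proof -
  have Zi: "central G (inv p)" by (rule central_inv[OF Z(1)])
  have e: "inv (a \<otimes> b0 \<otimes> p) \<otimes> (a \<otimes> b1 \<otimes> p') = (inv b0 \<otimes> b1) \<otimes> (inv p \<otimes> p')"
    using C Z[THEN centralC] Zi[THEN centralC]
    by (simp add: m_assoc inv_mult_group klc[OF Zi])
  have Y: "central G (inv p \<otimes> p')" by (rule central_mult[OF Zi Z(2)])
  show ?thesis
  proof
    assume "central G (inv (a \<otimes> b0 \<otimes> p) \<otimes> (a \<otimes> b1 \<otimes> p'))"
    then have "central G ((inv b0 \<otimes> b1) \<otimes> (inv p \<otimes> p') \<otimes> inv (inv p \<otimes> p'))"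
      unfolding e by (rule central_mult[OF _ central_inv[OF Y]])
    then show "central G (inv b0 \<otimes> b1)" using C Y[THEN centralC] by (simp add: m_assoc)
  next
    assume "central G (inv b0 \<otimes> b1)"
    then show "central G (inv (a \<otimes> b0 \<otimes> p) \<otimes> (a \<otimes> b1 \<otimes> p'))"
      unfolding e by (rule central_mult[OF _ Y])
  qed
qed

end

context emb
begin

definition kap where "kap = {(a,b). central G (inv (h a) \<otimes> h b)}"

lemma kap_cong: "is_cong kap"
proof (rule is_congI)
  fix a show "(a,a) \<in> kap" unfolding kap_def using hC central_one by simp
next
  fix a b assume "(a,b) \<in> kap"
  then have "central G (inv (inv (h a) \<otimes> h b))" unfolding kap_def by (simp add: central_inv)
  then show "(b,a) \<in> kap" unfolding kap_def using hC by (simp add: inv_mult_group)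
next
  fix a b c assume "(a,b) \<in> kap" "(b,c) \<in> kap"
  then have "central G ((inv (h a) \<otimes> h b) \<otimes> (inv (h b) \<otimes> h c))" unfolding kap_def by (simp add: central_mult)
  then show "(a,c) \<in> kap" unfolding kap_def using hC by (simp add: m_assoc)
next
  fix a b c d assume ab: "(a,b) \<in> kap" and cd: "(c,d) \<in> kap"
  have k1: "central G (inv (h a) \<otimes> h b)" and k2: "central G (inv (h c) \<otimes> h d)" using ab cd unfolding kap_def by auto
  have e1: "(inv (h a) \<otimes> h b) \<otimes> (inv (h c) \<otimes> h d) = inv (h c) \<otimes> ((inv (h a) \<otimes> h b) \<otimes> h d)"
    by (rule klc[OF k1]) (simp_all add: hC)
  have "inv (h (a*c)) \<otimes> h (b*d) = (inv (h a) \<otimes> h b) \<otimes> (inv (h c) \<otimes> h d)"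
    unfolding e1 hm using hC by (simp add: m_assoc inv_mult_group)
  then show "(a*c, b*d) \<in> kap" unfolding kap_def using central_mult[OF k1 k2] by simp
qed

definition nf2 :: "(bool \<Rightarrow> bool \<Rightarrow> 'a) \<Rightarrow> bool" where
  "nf2 F \<longleftrightarrow> (\<exists>A B P. (\<forall>i. A i \<in> carrier G \<and> B i \<in> carrier G) \<and> (\<forall>i j. central G (P i j)) \<and>
     (\<forall>x1 x2. F x1 x2 = A x1 \<otimes> B x2 \<otimes> P x1 x2))"

lemma nf2_M:
  assumes "f \<in> comm_M [\<alpha>,\<beta>]"
  shows "nf2 (\<lambda>x1 x2. h (f [x1,x2]))"
  using assms
proof (induction rule: comm_M.induct)
  case (gen g)
  obtain i a b where i0: "i < length [\<alpha>,\<beta>]" and "(a,b) \<in> [\<alpha>,\<beta>] ! i"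
    and g0: "g = (\<lambda>x. if length x = length [\<alpha>,\<beta>] then (if x!i then b else a) else 1)"
    using gen by (rule comm_gensE)
  have l: "length [\<alpha>,\<beta>] = 2" by simp
  have i: "i < 2" using i0 unfolding l .
  have g: "g = (\<lambda>x. if length x = 2 then (if x!i then b else a) else 1)" using g0 unfolding l .
  have c1: "central G \<one>" by (rule central_one)
  have "i = 0 \<or> i = 1" using i by linarith
  then show ?case
  proof (elim disjE)
    assume "i = 0"
    then show ?thesis unfolding nf2_def g
      by (rule_tac x="\<lambda>x1. h (if x1 then b else a)" in exI, rule_tac x="\<lambda>_. \<one>" in exI,
          rule_tac x="\<lambda>_ _. \<one>" in exI) (simp add: hC c1)
  next
    assume "i = 1"
    then show ?thesis unfolding nf2_def g
      by (rule_tac x="\<lambda>_. \<one>" in exI, rule_tac x="\<lambda>x1. h (if x1 then b else a)" in exI,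
          rule_tac x="\<lambda>_ _. \<one>" in exI) (simp add: hC c1)
  qed
next
  case (mult f g)
  obtain A B P where 1: "\<forall>i. A i \<in> carrier G \<and> B i \<in> carrier G" "\<forall>i j. central G (P i j)"
     "\<forall>x1 x2. h (f [x1,x2]) = A x1 \<otimes> B x2 \<otimes> P x1 x2"
    using mult.IH(1) unfolding nf2_def by blast
  obtain A' B' P' where 2: "\<forall>i. A' i \<in> carrier G \<and> B' i \<in> carrier G" "\<forall>i j. central G (P' i j)"
     "\<forall>x1 x2. h (g [x1,x2]) = A' x1 \<otimes> B' x2 \<otimes> P' x1 x2"
    using mult.IH(2) unfolding nf2_def by blast
  show ?case unfolding nf2_def
  proof (intro exI conjI allI)
    fix i j
    show "A i \<otimes> A' i \<in> carrier G" "B i \<otimes> B' i \<in> carrier G"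
      using 1(1) 2(1) by auto
    show "central G (P i j \<otimes> P' i j \<otimes> gcomm G (B j) (A' i))"
      using 1 2 by (auto intro!: central_mult nil)
  next
    fix x1 x2
    show "h (f [x1,x2] * g [x1,x2]) = (A x1 \<otimes> A' x1) \<otimes> (B x2 \<otimes> B' x2) \<otimes>
      (P x1 x2 \<otimes> P' x1 x2 \<otimes> gcomm G (B x2) (A' x1))"
      unfolding hm 1(3)[rule_format] 2(3)[rule_format]
      by (rule prod2) (use 1 2 in \<open>auto intro!: nil\<close>)
  qed
qed

lemma kap_tc: "term_cond [\<alpha>,\<beta>] kap"
proof (rule tc2I)
  fix f assume f: "f \<in> comm_M [\<alpha>,\<beta>]" and a: "(f [False,False], f [False,True]) \<in> kap"
  obtain A B P where 1: "\<forall>i. A i \<in> carrier G \<and> B i \<in> carrier G" "\<forall>i j. central G (P i j)"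
     "\<forall>x1 x2. h (f [x1,x2]) = A x1 \<otimes> B x2 \<otimes> P x1 x2"
    using nf2_M[OF f] unfolding nf2_def by blast
  have "central G (inv (B False) \<otimes> B True)"
    using a unfolding kap_def 1(3)[rule_format] using kap_lemma 1 by auto
  then show "(f [True,False], f [True,True]) \<in> kap"
    unfolding kap_def 1(3)[rule_format] using kap_lemma 1 by auto
qed

lemma C_central: "(a,b) \<in> commutator [\<alpha>,\<beta>] \<Longrightarrow> central G (inv (h a) \<otimes> h b)"
  using commutator_least[OF kap_cong kap_tc] unfolding kap_def by blast

lemma tcCU: "term_cond [commutator [\<alpha>,\<beta>], \<gamma>] \<delta>"
proof (rule tc2I)
  fix f assume f: "f \<in> comm_M [commutator [\<alpha>,\<beta>], \<gamma>]" and a: "(f [False,False], f [False,True]) \<in> \<delta>"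
  have "\<exists>z. central G z \<and> (\<forall>x2. h (f [True,x2]) = h (f [False,x2]) \<otimes> z)"
    using f
  proof (induction rule: comm_M.induct)
    case (gen g)
    obtain i a b where i0: "i < length [commutator [\<alpha>,\<beta>], \<gamma>]" and ab: "(a,b) \<in> [commutator [\<alpha>,\<beta>], \<gamma>] ! i"
      and g0: "g = (\<lambda>x. if length x = length [commutator [\<alpha>,\<beta>], \<gamma>] then (if x!i then b else a) else 1)"
      using gen by (rule comm_gensE)
    have l: "length [commutator [\<alpha>,\<beta>], \<gamma>] = 2" by simp
    have i: "i < 2" using i0 unfolding l .
    have g: "g = (\<lambda>x. if length x = 2 then (if x!i then b else a) else 1)" using g0 unfolding l .
    have "i = 0 \<or> i = 1" using i by linarith
    then show ?case
    proof (elim disjE)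
      assume i: "i = 0"
      have c: "central G (inv (h a) \<otimes> h b)" using C_central ab i by simp
      show ?thesis unfolding g using i c hC
        by (intro exI[of _ "inv (h a) \<otimes> h b"]) (simp add: m_assoc)
    next
      assume "i = 1"
      then show ?thesis unfolding g using hC central_one by auto
    qed
  next
    case (mult f g)
    obtain z where z: "central G z" "\<forall>x2. h (f [True,x2]) = h (f [False,x2]) \<otimes> z" using mult.IH(1) by blast
    obtain z' where z': "central G z'" "\<forall>x2. h (g [True,x2]) = h (g [False,x2]) \<otimes> z'" using mult.IH(2) by blast
    show ?case
      by (rule exI[of _ "z \<otimes> z'"]) (use z z' hC in \<open>simp add: hm central_mult m_assoc klc[OF z(1)] centralC\<close>)
  qed
  then obtain z where z: "central G z" "\<forall>x2. h (f [True,x2]) = h (f [False,x2]) \<otimes> z" by blast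
  have "h (f [False,False]) = h (f [False,True])" using a hk by blast
  then have "h (f [True,False]) = h (f [True,True])" using z by simp
  then show "(f [True,False], f [True,True]) \<in> \<delta>" using hk by blast
qed

lemma tcUC: "term_cond [\<gamma>, commutator [\<alpha>,\<beta>]] \<delta>"
proof (rule tc2I)
  fix f assume f: "f \<in> comm_M [\<gamma>, commutator [\<alpha>,\<beta>]]" and a: "(f [False,False], f [False,True]) \<in> \<delta>"
  have "\<exists>z. central G z \<and> (\<forall>x1. h (f [x1,True]) = h (f [x1,False]) \<otimes> z)"
    using f
  proof (induction rule: comm_M.induct)
    case (gen g)
    obtain i a b where i0: "i < length [\<gamma>, commutator [\<alpha>,\<beta>]]" and ab: "(a,b) \<in> [\<gamma>, commutator [\<alpha>,\<beta>]] ! i"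
      and g0: "g = (\<lambda>x. if length x = length [\<gamma>, commutator [\<alpha>,\<beta>]] then (if x!i then b else a) else 1)"
      using gen by (rule comm_gensE)
    have l: "length [\<gamma>, commutator [\<alpha>,\<beta>]] = 2" by simp
    have i: "i < 2" using i0 unfolding l .
    have g: "g = (\<lambda>x. if length x = 2 then (if x!i then b else a) else 1)" using g0 unfolding l .
    have "i = 0 \<or> i = 1" using i by linarith
    then show ?case
    proof (elim disjE)
      assume "i = 0"
      then show ?thesis unfolding g using hC central_one by auto
    next
      assume i: "i = 1"
      have c: "central G (inv (h a) \<otimes> h b)" using C_central ab i by simp
      show ?thesis unfolding g using i c hC
        by (intro exI[of _ "inv (h a) \<otimes> h b"]) (simp add: m_assoc)
    qed
  next
    case (mult f g)
    obtain z where z: "central G z" "\<forall>x1. h (f [x1,True]) = h (f [x1,False]) \<otimes> z" using mult.IH(1) by blast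
    obtain z' where z': "central G z'" "\<forall>x1. h (g [x1,True]) = h (g [x1,False]) \<otimes> z'" using mult.IH(2) by blast
    show ?case
      by (rule exI[of _ "z \<otimes> z'"]) (use z z' hC in \<open>simp add: hm central_mult m_assoc klc[OF z(1)] centralC\<close>)
  qed
  then obtain z where z: "central G z" "\<forall>x1. h (f [x1,True]) = h (f [x1,False]) \<otimes> z" by blast
  have "h (f [False,False]) = h (f [False,True])" using a hk by blast
  then have "h (f [False,False]) = h (f [False,False]) \<otimes> z" using z by simp
  then have "z = \<one>" using z hC centralC by simp
  then have "h (f [True,False]) = h (f [True,True])" using z hC by simp
  then show "(f [True,False], f [True,True]) \<in> \<delta>" using hk by blast
qed

end

lemma emb_from_embeds:
  assumes "nilpotent2_group G" "quot_embeds_into \<delta> G"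
  obtains h where "emb G h \<delta>"
proof -
  obtain h where h: "\<forall>x. h x \<in> carrier G" "\<forall>x y. h (x * y) = h x \<otimes>\<^bsub>G\<^esub> h y"
      "\<forall>x y. h x = h y \<longleftrightarrow> (x, y) \<in> \<delta>"
    using assms(2) unfolding quot_embeds_into_def by blast
  have g: "group G" using assms(1) unfolding nilpotent2_group_def by blast
  have "emb G h \<delta>"
    unfolding emb_def emb_axioms_def using g h nilpotent2_groupD[OF assms(1)] by blast
  then show ?thesis by (rule that)
qed

lemma nil2_embeds_T:
  assumes "is_cong \<delta>" "nilpotent2_group (G :: ('g,'b) monoid_scheme)" "quot_embeds_into \<delta> G"
  shows "commutator [total_cong, total_cong, total_cong] \<subseteq> (\<delta> :: ('a::monoid_mult \<times> 'a) set)"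
proof -
  obtain h where e: "emb G h \<delta>" using emb_from_embeds[OF assms(2,3)] by blast
  show ?thesis by (rule commutator_least[OF assms(1) emb.tc3[OF e]])
qed

lemma canc_malcev_T:
  assumes "cancellative_cong \<sigma>" "\<And>x y z. (x*y*z*y*x, y*x*z*x*y) \<in> \<sigma>"
  shows "commutator [total_cong, total_cong, total_cong] \<subseteq> (\<sigma> :: ('a::monoid_mult \<times> 'a) set)"
proof -
  interpret malc \<sigma> using assms by (unfold_locales)
  obtain G :: "('a \<times> bool) list monoid" where "nilpotent2_group G" "quot_embeds_into \<sigma> G"
    using malc_embeds by blast
  then show ?thesis using nil2_embeds_T cong by blast
qed

theorem corollary4p7:
  fixes T :: "('a::monoid_mult \<times> 'a) set"
  defines "T \<equiv> commutator [total_cong, total_cong, total_cong]"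
  shows "(\<exists>G :: ('a \<times> bool) list monoid. nilpotent2_group G \<and> quot_embeds_into T G)
         \<and> (\<forall>\<delta> (G :: 'g monoid). is_cong \<delta> \<and> nilpotent2_group G \<and> quot_embeds_into \<delta> G
              \<longrightarrow> T \<subseteq> \<delta>)
         \<and> T = canc_gen (cong_join (commutator [commutator [total_cong, total_cong], total_cong])
                                    (commutator [total_cong, commutator [total_cong, total_cong]]))
         \<and> T = canc_gen (commutator [commutator [total_cong, total_cong], total_cong])
         \<and> T = canc_gen rho2"
proof -
  let ?U = "total_cong :: ('a \<times> 'a) set"
  let ?C = "commutator [?U, ?U]"
  let ?CU = "commutator [?C, ?U]"
  let ?UC = "commutator [?U, ?C]"
  have Tcong: "is_cong T" unfolding T_def by (rule commutator_cong)
  have Ttc: "term_cond [?U, ?U, ?U] T" unfolding T_def by (rule commutator_tc)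
  interpret t: tc3cong T using Tcong Ttc by unfold_locales
  have Tcanc: "cancellative_cong T" by (rule t.canc)
  have Tmal: "(x*y*z*y*x, y*x*z*x*y) \<in> T" for x y z by (rule t.malcev)
  interpret m: malc T using Tcanc Tmal by unfold_locales
  have c1: "\<exists>G :: ('a \<times> bool) list monoid. nilpotent2_group G \<and> quot_embeds_into T G"
    by (rule m.malc_embeds)
  then obtain G0 :: "('a \<times> bool) list monoid" where G0: "nilpotent2_group G0" "quot_embeds_into T G0" by blast
  obtain h0 where e0: "emb G0 h0 T" using emb_from_embeds[OF G0] by blast
  have CU_T: "?CU \<subseteq> T" by (rule commutator_least[OF Tcong emb.tcCU[OF e0]])
  have UC_T: "?UC \<subseteq> T" by (rule commutator_least[OF Tcong emb.tcUC[OF e0]])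
  have c2: "\<forall>\<delta> (G :: 'g monoid). is_cong \<delta> \<and> nilpotent2_group G \<and> quot_embeds_into \<delta> G \<longrightarrow> T \<subseteq> \<delta>"
    unfolding T_def using nil2_embeds_T by blast
  have key: "T \<subseteq> \<sigma>" if "cancellative_cong \<sigma>" "?CU \<subseteq> \<sigma>" for \<sigma>
    unfolding T_def using canc_malcev_T[OF that(1)] malcev_in_CU that(2) by blast
  have c3: "T = canc_gen (cong_join ?CU ?UC)"
  proof
    show "canc_gen (cong_join ?CU ?UC) \<subseteq> T"
      by (rule canc_gen_least[OF Tcanc]) (unfold cong_join_def, rule cong_gen_least[OF Tcong], use CU_T UC_T in blast)
    show "T \<subseteq> canc_gen (cong_join ?CU ?UC)"
      by (rule key[OF canc_gen_canc]) (use canc_gen_sub[of "cong_join ?CU ?UC"] cong_gen_sub[of "?CU \<union> ?UC"] in \<open>unfold cong_join_def, blast\<close>)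
  qed
  have c4: "T = canc_gen ?CU"
  proof
    show "canc_gen ?CU \<subseteq> T" by (rule canc_gen_least[OF Tcanc CU_T])
    show "T \<subseteq> canc_gen ?CU" by (rule key[OF canc_gen_canc canc_gen_sub])
  qed
  have rho_T: "rho2 \<subseteq> T"
    unfolding rho2_def by (rule cong_gen_least[OF Tcong]) (use Tmal in blast)
  have c5: "T = canc_gen rho2"
  proof
    show "canc_gen rho2 \<subseteq> T" by (rule canc_gen_least[OF Tcanc rho_T])
    have "(x*y*z*y*x, y*x*z*x*y) \<in> canc_gen rho2" for x y z :: 'a
    proof -
      have "(x*y*z*y*x, y*x*z*x*y) \<in> {(x * y * z * y * x, y * x * z * x * y) | x y z. True}" by blast
      then have "(x*y*z*y*x, y*x*z*x*y) \<in> rho2" unfolding rho2_def by (rule subsetD[OF cong_gen_sub])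
      then show ?thesis by (rule subsetD[OF canc_gen_sub])
    qed
    then show "T \<subseteq> canc_gen rho2" unfolding T_def
      by (rule canc_malcev_T[OF canc_gen_canc])
  qed
  show ?thesis using c1 c2 c3 c4 c5 by blast
qed

end
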